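(* Let $b\ge0$ be an integer, $W\in\mathrm U(n)$ with columns $|w_1\rangle,\dots,|w_n\rangle$, and let $\sigma^{(2)}$ be the fourth-order moment matrix of $\mathcal U_W|b^n\rangle$. Then $$\sigma^{(2)}=(b+1)^2\big(I\otimes I+\mathrm{SWAP}\big)-b(b+1)\sum_{i=1}^n\big(|w_i\rangle\otimes|w_i\rangle\big)\big(\langle w_i|\otimes\langle w_i|\big),$$ where $\mathrm{SWAP}$ is the operator on $\mathbb C^n\otimes\mathbb C^n$ with $\mathrm{SWAP}(|u\rangle\otimes|v\rangle)=|v\rangle\otimes|u\rangle$. Consequently, for $b\ge1$, $A:=\frac{1}{b(b+1)}\big((b+1)^2(I\otimes I+\mathrm{SWAP})-\sigma^{(2)}\big)$ is the orthogonal projector $\sum_i (|w_i\rangle\otimes|w_i\rangle)(\langle w_i|\otimes\langle w_i|)$ of rank $n$.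
   Context: Consider $n$ bosonic modes with annihilation operators $a_1,\dots,a_n$ on the Fock space, $[a_i,a_j^\dagger]=\delta_{ij}$, $[a_i,a_j]=0$. $|b^n\rangle=|b,\dots,b\rangle$ is the Fock state with $b$ bosons in each mode. For $W\in\mathrm U(n)$, $\mathcal U_W$ denotes the passive Gaussian unitary with $\mathcal U_W|0\rangle=|0\rangle$ and $\mathcal U_W^\dagger a_i\mathcal U_W=\sum_j W_{ij}a_j$. For a state $|\psi\rangle$, $\sigma^{(2)}$ is the $n^2\times n^2$ matrix with rows indexed by $(i,j)$ and columns by $(k,l)$, $\sigma^{(2)}_{ij;kl}=\langle\psi|a_ia_ja_k^\dagger a_l^\dagger|\psi\rangle$, viewed as an operator on $\mathbb C^n\otimes\mathbb C^n$ with standard basis $|i\rangle\otimes|j\rangle$. *)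

theory Defs
  imports "HOL-Analysis.Analysis" "Jordan_Normal_Form.DL_Rank" "Jordan_Normal_Form.Schur_Decomposition"
begin

text \<open>A state is given by its
  coefficients in the Fock (occupation number) basis: a function from occupation vectors
  (nat \<Rightarrow> nat, zero outside the modes) to complex amplitudes.  We work on the dense
  subspace of finitely supported states, on which all operators below are defined.\<close>

type_synonym occ = "nat \<Rightarrow> nat"
type_synonym fstate = "occ \<Rightarrow> complex"

definition valid_occ :: "nat \<Rightarrow> occ \<Rightarrow> bool" where
  "valid_occ n m \<longleftrightarrow> (\<forall>k\<ge>n. m k = 0)"

definition fock_state :: "nat \<Rightarrow> fstate \<Rightarrow> bool" where
  "fock_state n \<psi> \<longleftrightarrow> finite {m. \<psi> m \<noteq> 0} \<and> (\<forall>m. \<psi> m \<noteq> 0 \<longrightarrow> valid_occ n m)"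

definition finner :: "fstate \<Rightarrow> fstate \<Rightarrow> complex" where
  "finner \<phi> \<psi> = (\<Sum>m\<in>{m. \<phi> m \<noteq> 0}. cnj (\<phi> m) * \<psi> m)"

text \<open>Annihilation: a_i|..,k,..> = sqrt k |..,k-1,..>; creation: a_i^dag|..,k,..> = sqrt(k+1)|..,k+1,..>.\<close>
definition annih :: "nat \<Rightarrow> fstate \<Rightarrow> fstate" where
  "annih i \<psi> = (\<lambda>m. complex_of_real (sqrt (real (m i + 1))) * \<psi> (m(i := m i + 1)))"

definition creat :: "nat \<Rightarrow> fstate \<Rightarrow> fstate" where
  "creat i \<psi> = (\<lambda>m. if m i = 0 then 0
                     else complex_of_real (sqrt (real (m i))) * \<psi> (m(i := m i - 1)))"

definition fock_basis :: "occ \<Rightarrow> fstate" where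
  "fock_basis m = (\<lambda>m'. if m' = m then 1 else 0)"

definition vacuum :: fstate where
  "vacuum = fock_basis (\<lambda>_. 0)"

definition uniform_fock :: "nat \<Rightarrow> nat \<Rightarrow> fstate" where
  "uniform_fock n b = fock_basis (\<lambda>k. if k < n then b else 0)"

definition passive_gaussian_unitary :: "nat \<Rightarrow> complex mat \<Rightarrow> (fstate \<Rightarrow> fstate) \<Rightarrow> bool" where
  "passive_gaussian_unitary n W U \<longleftrightarrow>
     (\<forall>\<psi>. fock_state n \<psi> \<longrightarrow> fock_state n (U \<psi>)) \<and>
     (\<exists>U'. (\<forall>\<psi>. fock_state n \<psi> \<longrightarrow> fock_state n (U' \<psi>)) \<and>
           (\<forall>\<phi> \<psi>. fock_state n \<phi> \<longrightarrow> fock_state n \<psi> \<longrightarrow> finner (U \<phi>) \<psi> = finner \<phi> (U' \<psi>)) \<and>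
           (\<forall>\<psi>. fock_state n \<psi> \<longrightarrow> U' (U \<psi>) = \<psi> \<and> U (U' \<psi>) = \<psi>) \<and>
           (\<forall>i<n. \<forall>\<psi>. fock_state n \<psi> \<longrightarrow>
               U' (annih i (U \<psi>)) = (\<lambda>m. \<Sum>j<n. W $$ (i, j) * annih j \<psi> m))) \<and>
     U vacuum = vacuum"

text \<open>Fourth-order moment matrix sigma^(2), n^2 x n^2, row (i,j) \<mapsto> i*n+j, column (k,l) \<mapsto> k*n+l,
  matching the basis |i> \<otimes> |j> of C^n \<otimes> C^n.\<close>
definition moment2 :: "nat \<Rightarrow> fstate \<Rightarrow> complex mat" where
  "moment2 n \<psi> = mat (n*n) (n*n) (\<lambda>(r, c).
      finner \<psi> (annih (r div n) (annih (r mod n) (creat (c div n) (creat (c mod n) \<psi>)))))"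

definition tensor_vec :: "complex vec \<Rightarrow> complex vec \<Rightarrow> complex vec" where
  "tensor_vec u v = vec (dim_vec u * dim_vec v) (\<lambda>r. u $ (r div dim_vec v) * v $ (r mod dim_vec v))"

definition outer :: "complex vec \<Rightarrow> complex vec \<Rightarrow> complex mat" where
  "outer u v = mat (dim_vec u) (dim_vec v) (\<lambda>(r, c). u $ r * cnj (v $ c))"

definition swap_mat :: "nat \<Rightarrow> complex mat" where
  "swap_mat n = mat (n*n) (n*n) (\<lambda>(r, c). if r div n = c mod n \<and> r mod n = c div n then 1 else 0)"

definition col_proj_sum :: "nat \<Rightarrow> complex mat \<Rightarrow> complex mat" where
  "col_proj_sum n W = mat (n*n) (n*n) (\<lambda>(r, c).
      \<Sum>i<n. outer (tensor_vec (col W i) (col W i)) (tensor_vec (col W i) (col W i)) $$ (r, c))"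

end

theory Submission
  imports Defs
begin


lemma finner_eq_sum:
  assumes "finite S" "{m. \<phi> m \<noteq> 0} \<subseteq> S"
  shows "finner \<phi> \<psi> = (\<Sum>m\<in>S. cnj (\<phi> m) * \<psi> m)"
  unfolding finner_def using assms by (intro sum.mono_neutral_left) auto

lemma finner_basis: "finner (fock_basis M) \<psi> = \<psi> M"
proof -
  have "{m. fock_basis M m \<noteq> 0} = {M}" by (auto simp: fock_basis_def)
  then show ?thesis by (simp add: finner_def fock_basis_def)
qed

lemma finner_scaled_basis: "finner (\<lambda>x. \<alpha> * fock_basis M x) \<psi> = cnj \<alpha> * \<psi> M"
proof (cases "\<alpha> = 0")
  case True then show ?thesis by (simp add: finner_def)
next
  case False
  have "{m. \<alpha> * fock_basis M m \<noteq> 0} = {M}" using False by (auto simp: fock_basis_def)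
  then show ?thesis by (simp add: finner_def fock_basis_def)
qed

lemma finner_lin: "finner \<phi> (\<lambda>m. \<Sum>j\<in>J. c j * x j m) = (\<Sum>j\<in>J. c j * finner \<phi> (x j))"
  unfolding finner_def by (simp add: sum_distrib_left sum.swap[of _ J] mult_ac)

lemma finner_cnj:
  assumes "finite {m. \<phi> m \<noteq> 0}" "finite {m. \<psi> m \<noteq> 0}"
  shows "finner \<psi> \<phi> = cnj (finner \<phi> \<psi>)"
proof -
  let ?S = "{m. \<phi> m \<noteq> 0} \<union> {m. \<psi> m \<noteq> 0}"
  have "finner \<psi> \<phi> = (\<Sum>m\<in>?S. cnj (\<psi> m) * \<phi> m)" using assms by (intro finner_eq_sum) auto
  moreover have "finner \<phi> \<psi> = (\<Sum>m\<in>?S. cnj (\<phi> m) * \<psi> m)" using assms by (intro finner_eq_sum) auto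
  ultimately show ?thesis by (simp add: mult.commute)
qed

lemma creat_supp: "{m. creat i \<phi> m \<noteq> 0} \<subseteq> (\<lambda>m. m(i := m i + 1)) ` {m. \<phi> m \<noteq> 0}"
proof
  fix m assume "m \<in> {m. creat i \<phi> m \<noteq> 0}"
  then have "m i \<noteq> 0" "\<phi> (m(i := m i - 1)) \<noteq> 0" by (auto simp: creat_def split: if_splits)
  moreover have "m = (m(i := m i - 1))(i := (m(i := m i - 1)) i + 1)" using \<open>m i \<noteq> 0\<close> by auto
  ultimately show "m \<in> (\<lambda>m. m(i := m i + 1)) ` {m. \<phi> m \<noteq> 0}" by blast
qed

lemma annih_supp: "{m. annih i \<phi> m \<noteq> 0} \<subseteq> (\<lambda>m. m(i := m i - 1)) ` {m. \<phi> m \<noteq> 0}"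
proof
  fix m assume "m \<in> {m. annih i \<phi> m \<noteq> 0}"
  then have "\<phi> (m(i := m i + 1)) \<noteq> 0" by (auto simp: annih_def)
  moreover have "m = (m(i := m i + 1))(i := (m(i := m i + 1)) i - 1)" by auto
  ultimately show "m \<in> (\<lambda>m. m(i := m i - 1)) ` {m. \<phi> m \<noteq> 0}" by blast
qed

lemma inj_upd_suc: "inj (\<lambda>m::occ. m(i := m i + 1))"
proof (rule injI)
  fix x y :: occ assume h: "x(i := x i + 1) = y(i := y i + 1)"
  show "x = y"
  proof
    fix k show "x k = y k" using fun_cong[OF h, of k] by (cases "k = i") auto
  qed
qed

lemma finner_creat_annih:
  assumes "finite {m. \<phi> m \<noteq> 0}"
  shows "finner (creat i \<phi>) \<psi> = finner \<phi> (annih i \<psi>)"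
proof -
  let ?g = "\<lambda>m::occ. m(i := m i + 1)"
  have "finner (creat i \<phi>) \<psi> = (\<Sum>m\<in>?g ` {m. \<phi> m \<noteq> 0}. cnj (creat i \<phi> m) * \<psi> m)"
    using assms creat_supp by (intro finner_eq_sum) auto
  also have "\<dots> = (\<Sum>m\<in>{m. \<phi> m \<noteq> 0}. cnj (creat i \<phi> (?g m)) * \<psi> (?g m))"
    using inj_upd_suc[of i] by (subst sum.reindex) (auto simp: inj_on_def)
  also have "\<dots> = (\<Sum>m\<in>{m. \<phi> m \<noteq> 0}. cnj (\<phi> m) * annih i \<psi> m)"
  proof (rule sum.cong)
    fix m assume "m \<in> {m. \<phi> m \<noteq> 0}"
    have e: "(?g m)(i := ?g m i - 1) = m" by auto
    show "cnj (creat i \<phi> (?g m)) * \<psi> (?g m) = cnj (\<phi> m) * annih i \<psi> m"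
      unfolding creat_def annih_def using e by simp
  qed simp
  finally show ?thesis by (simp add: finner_def)
qed

lemma fock_creat:
  assumes "i < n" "fock_state n \<psi>"
  shows "fock_state n (creat i \<psi>)"
  unfolding fock_state_def
proof
  show "finite {m. creat i \<psi> m \<noteq> 0}"
    using assms creat_supp[of i \<psi>] by (auto simp: fock_state_def intro: finite_subset)
  show "\<forall>m. creat i \<psi> m \<noteq> 0 \<longrightarrow> valid_occ n m"
  proof (intro allI impI)
    fix m assume "creat i \<psi> m \<noteq> 0"
    then have "\<psi> (m(i := m i - 1)) \<noteq> 0" by (auto simp: creat_def split: if_splits)
    then have "valid_occ n (m(i := m i - 1))" using assms by (auto simp: fock_state_def)
    then show "valid_occ n m" using assms(1) unfolding valid_occ_def
      by (metis fun_upd_other leD)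
  qed
qed

lemma fock_annih:
  assumes "i < n" "fock_state n \<psi>"
  shows "fock_state n (annih i \<psi>)"
  unfolding fock_state_def
proof
  show "finite {m. annih i \<psi> m \<noteq> 0}"
    using assms annih_supp[of i \<psi>] by (auto simp: fock_state_def intro: finite_subset)
  show "\<forall>m. annih i \<psi> m \<noteq> 0 \<longrightarrow> valid_occ n m"
  proof (intro allI impI)
    fix m assume "annih i \<psi> m \<noteq> 0"
    then have "\<psi> (m(i := m i + 1)) \<noteq> 0" by (auto simp: annih_def)
    then have "valid_occ n (m(i := m i + 1))" using assms by (auto simp: fock_state_def)
    then show "valid_occ n m" using assms(1) unfolding valid_occ_def
      by (metis fun_upd_other leD)
  qed
qed

lemma fock_lin:
  assumes "finite J" "\<And>j. j \<in> J \<Longrightarrow> fock_state n (x j)"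
  shows "fock_state n (\<lambda>m. \<Sum>j\<in>J. c j * x j m)"
  unfolding fock_state_def
proof
  have "{m. (\<Sum>j\<in>J. c j * x j m) \<noteq> 0} \<subseteq> (\<Union>j\<in>J. {m. x j m \<noteq> 0})"
  proof
    fix m assume "m \<in> {m. (\<Sum>j\<in>J. c j * x j m) \<noteq> 0}"
    then have "\<not> (\<forall>j\<in>J. c j * x j m = 0)" using sum.neutral[of J "\<lambda>j. c j * x j m"] by blast
    then obtain j where "j \<in> J" "c j * x j m \<noteq> 0" by blast
    then show "m \<in> (\<Union>j\<in>J. {m. x j m \<noteq> 0})" by auto
  qed
  moreover have "finite (\<Union>j\<in>J. {m. x j m \<noteq> 0})" using assms by (auto simp: fock_state_def)
  ultimately show "finite {m. (\<Sum>j\<in>J. c j * x j m) \<noteq> 0}" by (rule finite_subset)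
  show "\<forall>m. (\<Sum>j\<in>J. c j * x j m) \<noteq> 0 \<longrightarrow> valid_occ n m"
  proof (intro allI impI)
    fix m assume "(\<Sum>j\<in>J. c j * x j m) \<noteq> 0"
    then have "\<not> (\<forall>j\<in>J. c j * x j m = 0)" using sum.neutral[of J "\<lambda>j. c j * x j m"] by blast
    then obtain j where "j \<in> J" "c j * x j m \<noteq> 0" by blast
    then show "valid_occ n m" using assms(2)[of j] by (auto simp: fock_state_def)
  qed
qed

lemma fock_basis_fock: "valid_occ n M \<Longrightarrow> fock_state n (fock_basis M)"
  by (auto simp: fock_state_def fock_basis_def)

lemma fock_nondeg:
  assumes "fock_state n x" "fock_state n y" "\<And>\<phi>. fock_state n \<phi> \<Longrightarrow> finner \<phi> x = finner \<phi> y"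
  shows "x = y"
proof
  fix m show "x m = y m"
  proof (cases "valid_occ n m")
    case True then show ?thesis using assms(3)[OF fock_basis_fock[OF True]] by (simp add: finner_basis)
  next
    case False then show ?thesis using assms(1,2) unfolding fock_state_def by metis
  qed
qed




definition Cop :: "nat \<Rightarrow> complex mat \<Rightarrow> nat \<Rightarrow> fstate \<Rightarrow> fstate" where
  "Cop n W k x = (\<lambda>m. \<Sum>j<n. cnj (W $$ (k, j)) * creat j x m)"
definition Aop :: "nat \<Rightarrow> complex mat \<Rightarrow> nat \<Rightarrow> fstate \<Rightarrow> fstate" where
  "Aop n W k x = (\<lambda>m. \<Sum>j<n. W $$ (k, j) * annih j x m)"

lemma fock_fin: "fock_state n \<psi> \<Longrightarrow> finite {m. \<psi> m \<noteq> 0}" by (simp add: fock_state_def)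

lemma fock_Cop: "fock_state n x \<Longrightarrow> fock_state n (Cop n W k x)"
  unfolding Cop_def by (rule fock_lin) (auto intro: fock_creat)
lemma fock_Aop: "fock_state n x \<Longrightarrow> fock_state n (Aop n W k x)"
  unfolding Aop_def by (rule fock_lin) (auto intro: fock_annih)

lemma pgu_creat:
  assumes U: "passive_gaussian_unitary n W U" and k: "k < n" and \<xi>: "fock_state n \<xi>"
  shows "creat k (U \<xi>) = U (Cop n W k \<xi>)"
proof -
  from U obtain U' where UF: "\<forall>\<psi>. fock_state n \<psi> \<longrightarrow> fock_state n (U \<psi>)"
    and U'F: "\<forall>\<psi>. fock_state n \<psi> \<longrightarrow> fock_state n (U' \<psi>)"
    and adj: "\<forall>\<phi> \<psi>. fock_state n \<phi> \<longrightarrow> fock_state n \<psi> \<longrightarrow> finner (U \<phi>) \<psi> = finner \<phi> (U' \<psi>)"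
    and inv: "\<forall>\<psi>. fock_state n \<psi> \<longrightarrow> U' (U \<psi>) = \<psi> \<and> U (U' \<psi>) = \<psi>"
    and ann: "\<forall>i<n. \<forall>\<psi>. fock_state n \<psi> \<longrightarrow> U' (annih i (U \<psi>)) = (\<lambda>m. \<Sum>j<n. W $$ (i, j) * annih j \<psi> m)"
    unfolding passive_gaussian_unitary_def by blast
  define z where "z = creat k (U \<xi>)"
  have zF: "fock_state n z" using fock_creat k UF \<xi> z_def by blast
  have CF: "fock_state n (Cop n W k \<xi>)" using \<xi> by (rule fock_Cop)
  have "U' z = Cop n W k \<xi>"
  proof (rule fock_nondeg[of n])
    show "fock_state n (U' z)" using U'F zF by blast
    show "fock_state n (Cop n W k \<xi>)" by (rule CF)
    fix \<phi> assume \<phi>: "fock_state n \<phi>"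
    have UphiF: "fock_state n (U \<phi>)" using UF \<phi> by blast
    have aF: "fock_state n (annih k (U \<phi>))" using fock_annih[OF k UphiF] .
    have "finner \<phi> (U' z) = finner (U \<phi>) z" using adj \<phi> zF by simp
    also have "\<dots> = cnj (finner z (U \<phi>))" using fock_fin[OF zF] fock_fin[OF UphiF] by (rule finner_cnj)
    finally have 1: "finner \<phi> (U' z) = cnj (finner z (U \<phi>))" .
    have "finner z (U \<phi>) = finner (U \<xi>) (annih k (U \<phi>))"
      unfolding z_def by (rule finner_creat_annih) (use UF \<xi> fock_fin in blast)
    also have "\<dots> = finner \<xi> (U' (annih k (U \<phi>)))" using adj \<xi> aF by simp
    also have "U' (annih k (U \<phi>)) = (\<lambda>m. \<Sum>j<n. W $$ (k, j) * annih j \<phi> m)" using ann k \<phi> by blast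
    also have "finner \<xi> (\<lambda>m. \<Sum>j<n. W $$ (k, j) * annih j \<phi> m) = (\<Sum>j<n. W $$ (k, j) * finner \<xi> (annih j \<phi>))"
      by (rule finner_lin)
    also have "\<dots> = (\<Sum>j<n. W $$ (k, j) * finner (creat j \<xi>) \<phi>)"
      using finner_creat_annih[OF fock_fin[OF \<xi>]] by simp
    finally have 2: "finner z (U \<phi>) = (\<Sum>j<n. W $$ (k, j) * finner (creat j \<xi>) \<phi>)" .
    have 3: "cnj (finner (creat j \<xi>) \<phi>) = finner \<phi> (creat j \<xi>)" if "j < n" for j
      using finner_cnj[OF fock_fin[OF \<phi>] fock_fin[OF fock_creat[OF that \<xi>]]] by simp
    have "finner \<phi> (U' z) = (\<Sum>j<n. cnj (W $$ (k, j)) * finner \<phi> (creat j \<xi>))"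
      unfolding 1 2 cnj_sum by (simp add: 3)
    also have "\<dots> = finner \<phi> (Cop n W k \<xi>)" unfolding Cop_def by (rule finner_lin[symmetric])
    finally show "finner \<phi> (U' z) = finner \<phi> (Cop n W k \<xi>)" .
  qed
  then have "U (U' z) = U (Cop n W k \<xi>)" by simp
  then show ?thesis using inv zF z_def by simp
qed

lemma pgu_annih:
  assumes U: "passive_gaussian_unitary n W U" and k: "k < n" and \<xi>: "fock_state n \<xi>"
  shows "annih k (U \<xi>) = U (Aop n W k \<xi>)"
proof -
  from U obtain U' where UF: "\<forall>\<psi>. fock_state n \<psi> \<longrightarrow> fock_state n (U \<psi>)"
    and inv: "\<forall>\<psi>. fock_state n \<psi> \<longrightarrow> U' (U \<psi>) = \<psi> \<and> U (U' \<psi>) = \<psi>"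
    and ann: "\<forall>i<n. \<forall>\<psi>. fock_state n \<psi> \<longrightarrow> U' (annih i (U \<psi>)) = (\<lambda>m. \<Sum>j<n. W $$ (i, j) * annih j \<psi> m)"
    unfolding passive_gaussian_unitary_def by blast
  have aF: "fock_state n (annih k (U \<xi>))" using fock_annih[OF k] UF \<xi> by blast
  have "annih k (U \<xi>) = U (U' (annih k (U \<xi>)))" using inv aF by simp
  also have "U' (annih k (U \<xi>)) = Aop n W k \<xi>" using ann k \<xi> by (simp add: Aop_def)
  finally show ?thesis .
qed

lemma pgu_inner:
  assumes U: "passive_gaussian_unitary n W U" and "fock_state n x" "fock_state n y"
  shows "finner (U x) (U y) = finner x y"
proof -
  from U obtain U' where UF: "\<forall>\<psi>. fock_state n \<psi> \<longrightarrow> fock_state n (U \<psi>)"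
    and adj: "\<forall>\<phi> \<psi>. fock_state n \<phi> \<longrightarrow> fock_state n \<psi> \<longrightarrow> finner (U \<phi>) \<psi> = finner \<phi> (U' \<psi>)"
    and inv: "\<forall>\<psi>. fock_state n \<psi> \<longrightarrow> U' (U \<psi>) = \<psi> \<and> U (U' \<psi>) = \<psi>"
    unfolding passive_gaussian_unitary_def by blast
  show ?thesis using adj inv UF assms(2,3) by simp
qed

lemma moment_entry:
  assumes U: "passive_gaussian_unitary n W U" and idx: "i < n" "j < n" "k < n" "l < n"
    and \<xi>: "fock_state n \<xi>"
  shows "finner (U \<xi>) (annih i (annih j (creat k (creat l (U \<xi>)))))
       = finner \<xi> (Aop n W i (Aop n W j (Cop n W k (Cop n W l \<xi>))))"
proof -
  have f1: "fock_state n (Cop n W l \<xi>)" using \<xi> by (rule fock_Cop)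
  have f2: "fock_state n (Cop n W k (Cop n W l \<xi>))" using f1 by (rule fock_Cop)
  have f3: "fock_state n (Aop n W j (Cop n W k (Cop n W l \<xi>)))" using f2 by (rule fock_Aop)
  have f4: "fock_state n (Aop n W i (Aop n W j (Cop n W k (Cop n W l \<xi>))))" using f3 by (rule fock_Aop)
  have "annih i (annih j (creat k (creat l (U \<xi>)))) = U (Aop n W i (Aop n W j (Cop n W k (Cop n W l \<xi>))))"
    by (simp add: pgu_creat[OF U idx(4) \<xi>] pgu_creat[OF U idx(3) f1] pgu_annih[OF U idx(2) f2]
        pgu_annih[OF U idx(1) f3])
  then show ?thesis using pgu_inner[OF U \<xi> f4] by simp
qed




lemma annih_sum': "annih p (\<lambda>m. \<Sum>j\<in>J. f j m) = (\<lambda>m. \<Sum>j\<in>J. annih p (f j) m)"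
  by (simp add: annih_def fun_eq_iff sum_distrib_left)
lemma creat_sum': "creat p (\<lambda>m. \<Sum>j\<in>J. f j m) = (\<lambda>m. \<Sum>j\<in>J. creat p (f j) m)"
  by (simp add: creat_def fun_eq_iff sum_distrib_left)
lemma annih_scal: "annih p (\<lambda>m. c * f m) = (\<lambda>m. c * annih p f m)"
  by (simp add: annih_def fun_eq_iff mult_ac)
lemma creat_scal: "creat p (\<lambda>m. c * f m) = (\<lambda>m. c * creat p f m)"
  by (simp add: creat_def fun_eq_iff mult_ac)

lemma expand4:
  "Aop n W i (Aop n W j (Cop n W k (Cop n W l \<phi>))) m =
   (\<Sum>p<n. \<Sum>q<n. \<Sum>r<n. \<Sum>s<n. W $$ (i,p) * W $$ (j,q) * cnj (W $$ (k,r)) * cnj (W $$ (l,s))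
       * annih p (annih q (creat r (creat s \<phi>))) m)"
  unfolding Aop_def Cop_def
  by (simp only: annih_sum' creat_sum' annih_scal creat_scal sum_distrib_left mult.assoc)

definition Nocc :: "occ \<Rightarrow> nat \<Rightarrow> nat \<Rightarrow> occ" where
  "Nocc M p q = (M(p := M p + 1))(q := (M(p := M p + 1)) q + 1)"
definition kap :: "occ \<Rightarrow> nat \<Rightarrow> nat \<Rightarrow> complex" where
  "kap M p q = of_real (sqrt (real (M p + 1))) * of_real (sqrt (real ((M(p := M p + 1)) q + 1)))"

lemma creat_sbasis: "creat r (\<lambda>x. \<alpha> * fock_basis M x) =
   (\<lambda>x. (\<alpha> * of_real (sqrt (real (M r + 1)))) * fock_basis (M(r := M r + 1)) x)"
proof
  fix x :: occ
  show "creat r (\<lambda>x. \<alpha> * fock_basis M x) x = (\<alpha> * of_real (sqrt (real (M r + 1)))) * fock_basis (M(r := M r + 1)) x"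
  proof (cases "x = M(r := M r + 1)")
    case True
    then show ?thesis by (simp add: creat_def fock_basis_def)
  next
    case False
    have "\<not> (x r \<noteq> 0 \<and> x(r := x r - 1) = M)"
    proof
      assume h: "x r \<noteq> 0 \<and> x(r := x r - 1) = M"
      have "x = M(r := M r + 1)"
      proof
        fix k show "x k = (M(r := M r + 1)) k"
          using fun_cong[OF conjunct2[OF h], of k] conjunct1[OF h] by (cases "k = r") auto
      qed
      then show False using False by simp
    qed
    then show ?thesis using False by (auto simp: creat_def fock_basis_def)
  qed
qed

lemma creat2_basis: "creat q (creat p (fock_basis M)) = (\<lambda>x. kap M p q * fock_basis (Nocc M p q) x)"
proof -
  have e1: "creat p (fock_basis M) = (\<lambda>x. of_real (sqrt (real (M p + 1))) * fock_basis (M(p := M p + 1)) x)"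
    using creat_sbasis[of p 1 M] by simp
  show ?thesis by (simp only: e1 creat_sbasis kap_def Nocc_def)
qed

lemma Nocc_alt: "Nocc M p q = (\<lambda>k. M k + (if k = p then 1 else 0) + (if k = q then 1 else 0))"
  by (auto simp: Nocc_def fun_eq_iff)

lemma Nocc_eq: "Nocc M s r = Nocc M p q \<longleftrightarrow> (s = p \<and> r = q) \<or> (s = q \<and> r = p)"
proof
  assume "Nocc M s r = Nocc M p q"
  then have H: "\<And>k. (if k = s then 1 else 0) + (if k = r then 1 else 0) = (if k = p then 1 else (0::nat)) + (if k = q then 1 else 0)"
    unfolding Nocc_alt fun_eq_iff by (metis add.assoc add_left_cancel)
  have "s = p \<or> s = q" using H[of s] by (auto split: if_splits)
  then show "(s = p \<and> r = q) \<or> (s = q \<and> r = p)"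
  proof
    assume "s = p"
    then have "r = q" using H[of r] by (simp split: if_splits)
    then show ?thesis using \<open>s = p\<close> by simp
  next
    assume "s = q"
    then have "r = p" using H[of r] by (simp split: if_splits)
    then show ?thesis using \<open>s = q\<close> by simp
  qed
qed (auto simp: Nocc_alt fun_eq_iff)

lemma e_basis:
  "annih p (annih q (creat r (creat s (fock_basis M)))) M =
     cnj (kap M p q) * kap M s r * (if (s = p \<and> r = q) \<or> (s = q \<and> r = p) then 1 else 0)"
proof -
  have fin: "finite {m. fock_basis M m \<noteq> 0}" by (simp add: fock_basis_def)
  have fin2: "finite {m. creat p (fock_basis M) m \<noteq> 0}"
    using creat_supp[of p "fock_basis M"] fin by (auto intro: finite_subset)
  have "annih p (annih q (creat r (creat s (fock_basis M)))) M
      = finner (fock_basis M) (annih p (annih q (creat r (creat s (fock_basis M)))))"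
    by (simp add: finner_basis)
  also have "\<dots> = finner (creat q (creat p (fock_basis M))) (creat r (creat s (fock_basis M)))"
    by (simp add: finner_creat_annih[OF fin] finner_creat_annih[OF fin2])
  also have "\<dots> = cnj (kap M p q) * kap M s r * fock_basis (Nocc M s r) (Nocc M p q)"
    by (simp add: creat2_basis finner_scaled_basis)
  finally show ?thesis by (simp add: fock_basis_def Nocc_eq)
qed




lemma adj_dim: "dim_row (mat_adjoint A) = dim_col A" "dim_col (mat_adjoint A) = dim_row A"
  by (auto simp: mat_adjoint_def)

lemma adj_index: "i < dim_col A \<Longrightarrow> j < dim_row A \<Longrightarrow> mat_adjoint A $$ (i, j) = cnj (A $$ (j, i))"
  by (simp add: mat_adjoint_def mat_of_rows_index)

lemma unit1:
  assumes "W \<in> carrier_mat n n" "W * mat_adjoint W = 1\<^sub>m n" "i < n" "k < n"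
  shows "(\<Sum>p<n. W $$ (i, p) * cnj (W $$ (k, p))) = (if i = k then 1 else 0)"
proof -
  have "(W * mat_adjoint W) $$ (i, k) = (\<Sum>p<n. W $$ (i, p) * cnj (W $$ (k, p)))"
    using assms(1,3,4) by (simp add: adj_dim adj_index scalar_prod_def lessThan_atLeast0)
  moreover have "(W * mat_adjoint W) $$ (i, k) = (if i = k then 1 else 0)" using assms(2-4) by simp
  ultimately show ?thesis by simp
qed

lemma unit2:
  assumes "W \<in> carrier_mat n n" "mat_adjoint W * W = 1\<^sub>m n" "p < n" "q < n"
  shows "(\<Sum>i<n. cnj (W $$ (i, p)) * W $$ (i, q)) = (if p = q then 1 else 0)"
proof -
  have "(mat_adjoint W * W) $$ (p, q) = (\<Sum>i<n. cnj (W $$ (i, p)) * W $$ (i, q))"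
    using assms(1,3,4) by (simp add: adj_dim adj_index scalar_prod_def lessThan_atLeast0)
  moreover have "(mat_adjoint W * W) $$ (p, q) = (if p = q then 1 else 0)" using assms(2-4) by simp
  ultimately show ?thesis by simp
qed

lemma delta2:
  fixes n :: nat
  assumes "p < n" "q < n"
  shows "(\<Sum>r<n. \<Sum>s<n. f r s * (if p = r \<and> q = s then 1 else 0)) = (f p q :: complex)"
proof -
  have "(\<Sum>r<n. \<Sum>s<n. f r s * (if p = r \<and> q = s then 1 else 0)) = (\<Sum>r<n. if p = r then f r q else 0)"
    using assms by (intro sum.cong) (auto simp: if_distrib cong: if_cong)
  then show ?thesis using assms by (simp add: sum.delta')
qed

lemma delta3:
  fixes n :: nat
  assumes "p < n"
  shows "(\<Sum>q<n. \<Sum>r<n. \<Sum>s<n. f q r s * (if p = q \<and> q = r \<and> r = s then 1 else 0)) = (f p p p :: complex)"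
proof -
  have "(\<Sum>q<n. \<Sum>r<n. \<Sum>s<n. f q r s * (if p = q \<and> q = r \<and> r = s then 1 else 0)) = (\<Sum>q<n. if p = q then f q q q else 0)"
  proof (rule sum.cong)
    fix q assume "q \<in> {..<n}"
    have "\<And>r. (\<Sum>s<n. f q r s * (if p = q \<and> q = r \<and> r = s then 1 else 0)) = (if p = q \<and> q = r then f q q q else 0)"
      using \<open>q \<in> {..<n}\<close> by (auto simp: if_distrib sum.delta' cong: if_cong)
    then show "(\<Sum>r<n. \<Sum>s<n. f q r s * (if p = q \<and> q = r \<and> r = s then 1 else 0)) = (if p = q then f q q q else 0)"
      using \<open>q \<in> {..<n}\<close> by (auto simp: sum.delta')
  qed simp
  then show ?thesis using assms by (simp add: sum.delta')
qed




definition mbv :: "nat \<Rightarrow> nat \<Rightarrow> occ" where "mbv n b = (\<lambda>k. if k < n then b else 0)"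

lemma kap_eq: "p < n \<Longrightarrow> kap (mbv n b) p p = of_real (sqrt (real (b + 1)) * sqrt (real (b + 2)))"
  unfolding kap_def mbv_def by simp
lemma kap_ne: "p < n \<Longrightarrow> q < n \<Longrightarrow> p \<noteq> q \<Longrightarrow> kap (mbv n b) p q = of_real (real (b + 1))"
  unfolding kap_def mbv_def by (simp flip: of_real_mult del: of_nat_add)
lemma sq2: "(sqrt (real (b + 1)) * sqrt (real (b + 2))) * (sqrt (real (b + 1)) * sqrt (real (b + 2))) = real (b + 1) * real (b + 2)"
proof -
  have "(sqrt (real (b + 1)) * sqrt (real (b + 2))) * (sqrt (real (b + 1)) * sqrt (real (b + 2)))
     = (sqrt (real (b + 1)) * sqrt (real (b + 1))) * (sqrt (real (b + 2)) * sqrt (real (b + 2)))"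
    by (simp only: mult_ac)
  also have "\<dots> = real (b + 1) * real (b + 2)" by (simp only: real_sqrt_mult_self abs_of_nat)
  finally show ?thesis .
qed
lemma cnjr: "cnj (complex_of_real x) * complex_of_real x = complex_of_real (x * x)" by simp
lemma ind_mult: "(if a then 1 else 0) * (if c then 1 else (0::complex)) = (if a \<and> c then 1 else 0)" by simp

lemma e_val:
  assumes "p < n" "q < n" "r < n" "s < n"
  shows "annih p (annih q (creat r (creat s (uniform_fock n b)))) (mbv n b) =
    of_nat ((b+1)^2) * ((if p = r \<and> q = s then 1 else 0) + (if p = s \<and> q = r then 1 else 0))
     - of_nat (b*(b+1)) * (if p = q \<and> q = r \<and> r = s then 1 else 0)"
proof -
  have u: "uniform_fock n b = fock_basis (mbv n b)" by (simp add: uniform_fock_def mbv_def)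
  have E: "annih p (annih q (creat r (creat s (uniform_fock n b)))) (mbv n b) =
     cnj (kap (mbv n b) p q) * kap (mbv n b) s r * (if (s = p \<and> r = q) \<or> (s = q \<and> r = p) then 1 else 0)"
    unfolding u by (rule e_basis)
  have sq: "sqrt x * sqrt x = x" if "x \<ge> 0" for x :: real using that by simp
  show ?thesis
  proof (cases "(s = p \<and> r = q) \<or> (s = q \<and> r = p)")
    case False
    then have n1: "\<not> (p = r \<and> q = s)" "\<not> (p = s \<and> q = r)" "\<not> (p = q \<and> q = r \<and> r = s)" by auto
    show ?thesis unfolding E using False n1 by (simp only: if_False if_P mult_zero_right mult_zero_left add_0 diff_zero)
  next
    case c: True
    show ?thesis
    proof (cases "p = q")
      case True
      then have all: "p = q" "q = r" "r = s" using c by auto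
      have k1: "kap (mbv n b) p q = of_real (sqrt (real (b + 1)) * sqrt (real (b + 2)))"
        using kap_eq[OF assms(1), of b] True by simp
      have k2: "kap (mbv n b) s r = of_real (sqrt (real (b + 1)) * sqrt (real (b + 2)))"
        using kap_eq[OF assms(4), of b] all by simp
      have "annih p (annih q (creat r (creat s (uniform_fock n b)))) (mbv n b)
          = of_real (real (b + 1) * real (b + 2))"
        unfolding E k1 k2 cnjr sq2 using c by simp
      then show ?thesis using all by (simp add: algebra_simps power2_eq_square)
    next
      case False
      then have sr: "s \<noteq> r" using c by auto
      have k1: "kap (mbv n b) p q = of_real (real (b + 1))"
        using kap_ne[OF assms(1,2) False] .
      have k2: "kap (mbv n b) s r = of_real (real (b + 1))"
        using kap_ne[OF assms(4,3) sr] .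
      have "annih p (annih q (creat r (creat s (uniform_fock n b)))) (mbv n b)
          = of_real (real (b + 1) * real (b + 1))"
        unfolding E k1 k2 cnjr using c by simp
      moreover have "(if p = r \<and> q = s then 1 else 0) + (if p = s \<and> q = r then 1 else (0::complex)) = 1"
        using c False by auto
      ultimately show ?thesis using False by (simp add: power2_eq_square algebra_simps)
    qed
  qed
qed

lemma mult_ind: "(x::complex) * (if c then 1 else 0) = (if c then x else 0)" by simp

lemma delta2':
  fixes n :: nat
  assumes "p < n" "q < n"
  shows "(\<Sum>r<n. \<Sum>s<n. f r s * (if p = s \<and> q = r then 1 else 0)) = (f q p :: complex)"
proof -
  have "(\<Sum>s<n. f r s * (if p = s \<and> q = r then 1 else 0)) = (if q = r then f r p else 0)" for r
    using assms by (cases "q = r") (simp_all add: mult_ind)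
  then show ?thesis using assms by simp
qed

lemma entry_sum:
  fixes n b :: nat
  assumes W: "W \<in> carrier_mat n n" "W * mat_adjoint W = 1\<^sub>m n"
    and idx: "i < n" "j < n" "k < n" "l < n"
  shows "(\<Sum>p<n. \<Sum>q<n. \<Sum>r<n. \<Sum>s<n. W $$ (i,p) * W $$ (j,q) * cnj (W $$ (k,r)) * cnj (W $$ (l,s))
      * (of_nat ((b+1)^2) * ((if p = r \<and> q = s then 1 else 0) + (if p = s \<and> q = r then 1 else 0))
         - of_nat (b*(b+1)) * (if p = q \<and> q = r \<and> r = s then 1 else 0)))
    = of_nat ((b+1)^2) * ((if i = k \<and> j = l then 1 else 0) + (if i = l \<and> j = k then 1 else 0))
      - of_nat (b*(b+1)) * (\<Sum>p<n. W $$ (i,p) * W $$ (j,p) * cnj (W $$ (k,p)) * cnj (W $$ (l,p)))"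
proof -
  define X where "X p q r s = W $$ (i,p) * W $$ (j,q) * cnj (W $$ (k,r)) * cnj (W $$ (l,s))" for p q r s
  define A :: complex where "A = of_nat ((b+1)^2)"
  define B :: complex where "B = of_nat (b*(b+1))"
  define I1 :: "nat \<Rightarrow> nat \<Rightarrow> nat \<Rightarrow> nat \<Rightarrow> complex" where "I1 p q r s = (if p = r \<and> q = s then 1 else 0)" for p q r s
  define I2 :: "nat \<Rightarrow> nat \<Rightarrow> nat \<Rightarrow> nat \<Rightarrow> complex" where "I2 p q r s = (if p = s \<and> q = r then 1 else 0)" for p q r s
  define I3 :: "nat \<Rightarrow> nat \<Rightarrow> nat \<Rightarrow> nat \<Rightarrow> complex" where "I3 p q r s = (if p = q \<and> q = r \<and> r = s then 1 else 0)" for p q r s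
  have pw: "X p q r s * (A * (I1 p q r s + I2 p q r s) - B * I3 p q r s)
     = A * (X p q r s * I1 p q r s) + A * (X p q r s * I2 p q r s) - B * (X p q r s * I3 p q r s)" for p q r s
    by (simp add: algebra_simps)
  have "(\<Sum>p<n. \<Sum>q<n. \<Sum>r<n. \<Sum>s<n. X p q r s * (A * (I1 p q r s + I2 p q r s) - B * I3 p q r s))
     = (\<Sum>p<n. \<Sum>q<n. \<Sum>r<n. \<Sum>s<n. A * (X p q r s * I1 p q r s) + A * (X p q r s * I2 p q r s) - B * (X p q r s * I3 p q r s))"
    by (simp only: pw)
  also have "\<dots> = A * (\<Sum>p<n. \<Sum>q<n. \<Sum>r<n. \<Sum>s<n. X p q r s * I1 p q r s)
     + A * (\<Sum>p<n. \<Sum>q<n. \<Sum>r<n. \<Sum>s<n. X p q r s * I2 p q r s)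
     - B * (\<Sum>p<n. \<Sum>q<n. \<Sum>r<n. \<Sum>s<n. X p q r s * I3 p q r s)"
    by (simp add: sum.distrib sum_subtractf sum_distrib_left)
  also have "(\<Sum>p<n. \<Sum>q<n. \<Sum>r<n. \<Sum>s<n. X p q r s * I1 p q r s) = (\<Sum>p<n. \<Sum>q<n. X p q p q)"
    unfolding I1_def by (intro sum.cong refl) (simp add: delta2)
  also have "(\<Sum>p<n. \<Sum>q<n. \<Sum>r<n. \<Sum>s<n. X p q r s * I2 p q r s) = (\<Sum>p<n. \<Sum>q<n. X p q q p)"
    unfolding I2_def by (intro sum.cong refl) (simp add: delta2')
  also have "(\<Sum>p<n. \<Sum>q<n. \<Sum>r<n. \<Sum>s<n. X p q r s * I3 p q r s) = (\<Sum>p<n. X p p p p)"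
    unfolding I3_def by (intro sum.cong refl) (simp add: delta3)
  also have "(\<Sum>p<n. \<Sum>q<n. X p q p q) = (\<Sum>p<n. W $$ (i,p) * cnj (W $$ (k,p))) * (\<Sum>q<n. W $$ (j,q) * cnj (W $$ (l,q)))"
    unfolding X_def sum_product by (intro sum.cong refl) (simp add: mult_ac)
  also have "(\<Sum>p<n. \<Sum>q<n. X p q q p) = (\<Sum>p<n. W $$ (i,p) * cnj (W $$ (l,p))) * (\<Sum>q<n. W $$ (j,q) * cnj (W $$ (k,q)))"
    unfolding X_def sum_product by (intro sum.cong refl) (simp add: mult_ac)
  also have "A * ((\<Sum>p<n. W $$ (i,p) * cnj (W $$ (k,p))) * (\<Sum>q<n. W $$ (j,q) * cnj (W $$ (l,q))))
       + A * ((\<Sum>p<n. W $$ (i,p) * cnj (W $$ (l,p))) * (\<Sum>q<n. W $$ (j,q) * cnj (W $$ (k,q))))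
       - B * (\<Sum>p<n. X p p p p)
     = A * ((if i = k \<and> j = l then 1 else 0) + (if i = l \<and> j = k then 1 else 0)) - B * (\<Sum>p<n. X p p p p)"
    unfolding unit1[OF W idx(1,3)] unit1[OF W idx(2,4)] unit1[OF W idx(1,4)] unit1[OF W idx(2,3)] ind_mult
    by (simp only: distrib_left)
  finally show ?thesis unfolding X_def A_def B_def I1_def I2_def I3_def .
qed




lemma sum_divmod:
  fixes n :: nat
  shows "(\<Sum>t<n*n. g (t div n) (t mod n)) = (\<Sum>i<n. \<Sum>j<n. (g i j :: 'a :: comm_monoid_add))"
proof -
  have "(\<Sum>t<n*n. g (t div n) (t mod n)) = (\<Sum>(i,j)\<in>{..<n}\<times>{..<n}. g i j)"
  proof (rule sum.reindex_bij_witness[where i="\<lambda>(i,j). i*n+j" and j="\<lambda>t. (t div n, t mod n)"])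
    fix t assume t: "t \<in> {..<n*n}"
    then have n: "n > 0" by (cases n) auto
    show "(case (t div n, t mod n) of (i, j) \<Rightarrow> i * n + j) = t" by simp
    show "(t div n, t mod n) \<in> {..<n} \<times> {..<n}" using t n by (auto simp: less_mult_imp_div_less)
    show "(case (t div n, t mod n) of (i, j) \<Rightarrow> g i j) = g (t div n) (t mod n)" by simp
  next
    fix a assume a: "a \<in> {..<n} \<times> {..<n}"
    obtain i j where ij: "a = (i, j)" "i < n" "j < n" using a by auto
    have "i * n + j < n * n"
    proof -
      have "i * n + j < i * n + n" using ij by simp
      also have "\<dots> = (i + 1) * n" by simp
      also have "\<dots> \<le> n * n" using ij by (metis Suc_eq_plus1 Suc_leI mult.commute mult_le_mono2)
      finally show ?thesis .
    qed
    then show "(case a of (i, j) \<Rightarrow> i * n + j) \<in> {..<n * n}" using ij by simp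
    show "((case a of (i, j) \<Rightarrow> i * n + j) div n, (case a of (i, j) \<Rightarrow> i * n + j) mod n) = a"
      using ij by simp
  qed
  then show ?thesis by (simp add: sum.cartesian_product)
qed

definition Vm :: "nat \<Rightarrow> complex mat \<Rightarrow> complex mat" where
  "Vm n W = mat (n*n) n (\<lambda>(r,p). W $$ (r div n, p) * W $$ (r mod n, p))"

lemma Vm_carrier: "Vm n W \<in> carrier_mat (n*n) n" by (simp add: Vm_def)

lemma divmod_lt: "r < n * n \<Longrightarrow> r div n < n \<and> r mod n < (n::nat)"
  by (metis less_mult_imp_div_less mod_less_divisor mult_is_0 not_gr_zero not_less_zero)

lemma P_eq:
  assumes W: "W \<in> carrier_mat n n"
  shows "col_proj_sum n W = Vm n W * mat_adjoint (Vm n W)"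
proof (rule eq_matI)
  show "dim_row (col_proj_sum n W) = dim_row (Vm n W * mat_adjoint (Vm n W))"
    by (simp add: col_proj_sum_def Vm_def)
  show "dim_col (col_proj_sum n W) = dim_col (Vm n W * mat_adjoint (Vm n W))"
    by (simp add: col_proj_sum_def Vm_def adj_dim)
  fix r c assume r: "r < dim_row (Vm n W * mat_adjoint (Vm n W))" and c: "c < dim_col (Vm n W * mat_adjoint (Vm n W))"
  then have r': "r < n * n" and c': "c < n * n" by (simp_all add: Vm_def adj_dim)
  have dr: "r div n < n" "r mod n < n" using divmod_lt[OF r'] by auto
  have dc: "c div n < n" "c mod n < n" using divmod_lt[OF c'] by auto
  have "(Vm n W * mat_adjoint (Vm n W)) $$ (r, c) = (\<Sum>p<n. Vm n W $$ (r, p) * cnj (Vm n W $$ (c, p)))"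
    using r' c' by (simp add: Vm_def adj_dim adj_index scalar_prod_def lessThan_atLeast0)
  also have "\<dots> = (\<Sum>p<n. W $$ (r div n, p) * W $$ (r mod n, p) * cnj (W $$ (c div n, p) * W $$ (c mod n, p)))"
    using r' c' by (intro sum.cong refl) (simp add: Vm_def)
  also have "\<dots> = col_proj_sum n W $$ (r, c)"
    using r' c' W dr dc by (simp add: col_proj_sum_def outer_def tensor_vec_def)
  finally show "col_proj_sum n W $$ (r, c) = (Vm n W * mat_adjoint (Vm n W)) $$ (r, c)" by simp
qed

lemma VadjV:
  assumes W: "W \<in> carrier_mat n n" and U2: "mat_adjoint W * W = 1\<^sub>m n"
  shows "mat_adjoint (Vm n W) * Vm n W = 1\<^sub>m n"
proof (rule eq_matI)
  show "dim_row (mat_adjoint (Vm n W) * Vm n W) = dim_row (1\<^sub>m n)" by (simp add: Vm_def adj_dim)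
  show "dim_col (mat_adjoint (Vm n W) * Vm n W) = dim_col (1\<^sub>m n)" by (simp add: Vm_def adj_dim)
  fix p q assume p: "p < dim_row (1\<^sub>m n)" and q: "q < dim_col (1\<^sub>m n)"
  then have p': "p < n" and q': "q < n" by auto
  have "(mat_adjoint (Vm n W) * Vm n W) $$ (p, q) = (\<Sum>t<n*n. cnj (Vm n W $$ (t, p)) * Vm n W $$ (t, q))"
    using p' q' by (simp add: Vm_def adj_dim adj_index scalar_prod_def lessThan_atLeast0)
  also have "\<dots> = (\<Sum>t<n*n. (\<lambda>i j. cnj (W $$ (i, p)) * W $$ (i, q) * (cnj (W $$ (j, p)) * W $$ (j, q))) (t div n) (t mod n))"
    using p' q' by (intro sum.cong refl) (simp add: Vm_def mult_ac)
  also have "\<dots> = (\<Sum>i<n. \<Sum>j<n. cnj (W $$ (i, p)) * W $$ (i, q) * (cnj (W $$ (j, p)) * W $$ (j, q)))"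
    by (rule sum_divmod)
  also have "\<dots> = (\<Sum>i<n. cnj (W $$ (i, p)) * W $$ (i, q)) * (\<Sum>j<n. cnj (W $$ (j, p)) * W $$ (j, q))"
    by (simp add: sum_product)
  also have "\<dots> = (if p = q then 1 else 0)" using unit2[OF W U2 p' q'] by simp
  finally show "(mat_adjoint (Vm n W) * Vm n W) $$ (p, q) = 1\<^sub>m n $$ (p, q)" using p' q' by simp
qed



lemma adj_carrier: "V \<in> carrier_mat N k \<Longrightarrow> mat_adjoint V \<in> carrier_mat k N"
  unfolding carrier_mat_def by (simp add: adj_dim)
lemma cols_carrier': "B \<in> carrier_mat nr nc \<Longrightarrow> set (cols B) \<subseteq> carrier_vec nr"
  by (auto simp: cols_def)
lemma rank_VVadj:
  fixes V :: "complex mat"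
  assumes V: "V \<in> carrier_mat N k" and adjV: "mat_adjoint V * V = 1\<^sub>m k"
  shows "vec_space.rank N (V * mat_adjoint V) = k"
proof -
  interpret vec_space "TYPE(complex)" N .
  let ?A = "mat_adjoint V"
  let ?P = "V * ?A"
  have A: "?A \<in> carrier_mat k N" using V by (rule adj_carrier)
  have P: "?P \<in> carrier_mat N N" using V A by (rule mult_carrier_mat)
  have PV: "?P * V = V"
  proof -
    have "?P * V = V * (?A * V)" by (rule assoc_mult_mat[OF V A V])
    also have "\<dots> = V" unfolding adjV by (rule right_mult_one_mat[OF V])
    finally show ?thesis .
  qed
  have colsV: "set (cols V) \<subseteq> carrier_vec N" using V by (rule cols_carrier')
  have colsP: "set (cols ?P) \<subseteq> carrier_vec N" using P by (rule cols_carrier')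
  have inspan: "B *\<^sub>v v \<in> span (set (cols B))" if B: "B \<in> carrier_mat N m" and v: "v \<in> carrier_vec m" for B v m
  proof -
    have "B *\<^sub>v v = mat_of_cols N (cols B) *\<^sub>v v" using mat_of_cols_cols[of B] B by simp
    also have "\<dots> = lincomb (\<lambda>l. sum (\<lambda>i. if l = cols B ! i then v $ i else 0) {0..<length (cols B)}) (set (cols B))"
      by (rule mat_of_cols_mult_as_finsum) (use B v in auto)
    finally show ?thesis using B by (intro in_spanI) (auto simp: cols_def)
  qed
  have s1: "set (cols ?P) \<subseteq> span (set (cols V))"
  proof
    fix x assume "x \<in> set (cols ?P)"
    then obtain c where c: "c < N" "x = col ?P c" using P by (auto simp: in_set_conv_nth)
    have "x = V *\<^sub>v col ?A c" unfolding c(2) by (rule col_mult2[OF V A c(1)])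
    moreover have "col ?A c \<in> carrier_vec k" by (rule col_carrier_vec[OF c(1) A])
    ultimately show "x \<in> span (set (cols V))" using inspan[OF V] by simp
  qed
  have s2: "set (cols V) \<subseteq> span (set (cols ?P))"
  proof
    fix x assume "x \<in> set (cols V)"
    then obtain c where c: "c < k" "x = col V c" using V by (auto simp: in_set_conv_nth)
    have "x = col (?P * V) c" using PV c(2) by simp
    also have "\<dots> = ?P *\<^sub>v col V c" by (rule col_mult2[OF P V c(1)])
    finally have "x = ?P *\<^sub>v col V c" .
    moreover have "col V c \<in> carrier_vec N" by (rule col_carrier_vec[OF c(1) V])
    ultimately show "x \<in> span (set (cols ?P))" using inspan[OF P] by simp
  qed
  have "span (set (cols ?P)) = span (set (cols V))"
    using span_subsetI[OF colsV s1] span_subsetI[OF colsP s2] by blast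
  then have "rank ?P = rank V" unfolding rank_def by simp
  also have "rank V = k"
  proof -
    have dist: "distinct (cols V)"
    proof (rule ccontr)
      assume "\<not> distinct (cols V)"
      then obtain p q where pq: "p < k" "q < k" "p \<noteq> q" "cols V ! p = cols V ! q"
        using V by (auto simp: distinct_conv_nth)
      then have cpq: "col V p = col V q" using V by simp
      have e: "(?A * V) $$ (p, q) = (\<Sum>t<N. cnj (V $$ (t, p)) * V $$ (t, q))" if "p < k" "q < k" for p q
        using V that by (simp add: adj_dim adj_index scalar_prod_def lessThan_atLeast0)
      have "(\<Sum>t<N. cnj (V $$ (t, p)) * V $$ (t, q)) = (\<Sum>t<N. cnj (V $$ (t, p)) * V $$ (t, p))"
      proof (rule sum.cong[OF refl])
        fix t assume "t \<in> {..<N}"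
        then have "V $$ (t, p) = V $$ (t, q)" using arg_cong[OF cpq, of "\<lambda>v. v $ t"] V pq by simp
        then show "cnj (V $$ (t, p)) * V $$ (t, q) = cnj (V $$ (t, p)) * V $$ (t, p)"
          using \<open>t \<in> {..<N}\<close> pq V by simp
      qed
      then have "(?A * V) $$ (p, q) = (?A * V) $$ (p, p)" unfolding e[OF pq(1,2)] e[OF pq(1,1)] .
      then show False using adjV pq by simp
    qed
    have li: "lin_indpt (set (cols V))"
    proof
      assume "lin_dep (set (cols V))"
      then obtain v where v: "v \<in> carrier_vec k" "v \<noteq> 0\<^sub>v k" "V *\<^sub>v v = 0\<^sub>v N"
        using lin_depE[OF V _ dist] by blast
      have "v = (?A * V) *\<^sub>v v" using adjV v by simp
      also have "\<dots> = ?A *\<^sub>v (V *\<^sub>v v)" using A V v by simp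
      also have "\<dots> = 0\<^sub>v k" using v A by (auto intro!: eq_vecI simp: scalar_prod_def)
      finally show False using v by simp
    qed
    show ?thesis by (rule lin_indpt_full_rank[OF V dist li])
  qed
  finally show ?thesis .
qed



lemma divmod_eq_iff: "(r::nat) = c \<longleftrightarrow> (r div n = c div n \<and> r mod n = c mod n)"
  by (metis div_mult_mod_eq)

lemma rhs_entry:
  assumes W: "W \<in> carrier_mat n n" and r: "r < n*n" and c: "c < n*n"
  shows "(of_nat A \<cdot>\<^sub>m (1\<^sub>m (n*n) + swap_mat n) - of_nat B \<cdot>\<^sub>m col_proj_sum n W) $$ (r, c)
    = of_nat A * ((if r div n = c div n \<and> r mod n = c mod n then 1 else 0) + (if r div n = c mod n \<and> r mod n = c div n then 1 else 0))
      - of_nat B * (\<Sum>p<n. W $$ (r div n, p) * W $$ (r mod n, p) * cnj (W $$ (c div n, p)) * cnj (W $$ (c mod n, p)))"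
proof -
  have dr: "r div n < n" "r mod n < n" using divmod_lt[OF r] by auto
  have dc: "c div n < n" "c mod n < n" using divmod_lt[OF c] by auto
  have cp: "col_proj_sum n W $$ (r, c) = (\<Sum>p<n. W $$ (r div n, p) * W $$ (r mod n, p) * cnj (W $$ (c div n, p)) * cnj (W $$ (c mod n, p)))"
    using r c W dr dc by (simp add: col_proj_sum_def outer_def tensor_vec_def mult_ac)
  have sw: "swap_mat n $$ (r, c) = (if r div n = c mod n \<and> r mod n = c div n then 1 else 0)"
    using r c by (simp add: swap_mat_def)
  have one: "1\<^sub>m (n*n) $$ (r, c) = (if r div n = c div n \<and> r mod n = c mod n then 1 else 0)"
    using r c divmod_eq_iff[of r c n] by simp
  have car: "col_proj_sum n W \<in> carrier_mat (n*n) (n*n)" "swap_mat n \<in> carrier_mat (n*n) (n*n)"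
    by (simp_all add: col_proj_sum_def swap_mat_def)
  show ?thesis using r c car
    by (simp add: cp sw one)
qed

theorem mainTheorem3:
  fixes n b :: nat and W :: "complex mat" and U :: "fstate \<Rightarrow> fstate"
  assumes W_carrier: "W \<in> carrier_mat n n"
    and W_unitary: "W * mat_adjoint W = 1\<^sub>m n" "mat_adjoint W * W = 1\<^sub>m n"
    and U_W: "passive_gaussian_unitary n W U"
  defines "\<sigma> \<equiv> moment2 n (U (uniform_fock n b))"
  shows "\<sigma> = of_nat ((b+1)^2) \<cdot>\<^sub>m (1\<^sub>m (n*n) + swap_mat n) - of_nat (b*(b+1)) \<cdot>\<^sub>m col_proj_sum n W
         \<and> (b \<ge> 1 \<longrightarrow>
              (let A = (1 / of_nat (b*(b+1))) \<cdot>\<^sub>m (of_nat ((b+1)^2) \<cdot>\<^sub>m (1\<^sub>m (n*n) + swap_mat n) - \<sigma>)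
               in A = col_proj_sum n W \<and> A * A = A \<and> mat_adjoint A = A
                  \<and> vec_space.rank (n*n) A = n))"
proof -
  define \<phi>0 where "\<phi>0 = uniform_fock n b"
  have u: "\<phi>0 = fock_basis (mbv n b)" by (simp add: \<phi>0_def uniform_fock_def mbv_def)
  have \<phi>F: "fock_state n \<phi>0" unfolding u by (rule fock_basis_fock) (simp add: valid_occ_def mbv_def)
  define Y :: "complex mat" where "Y = of_nat ((b+1)^2) \<cdot>\<^sub>m (1\<^sub>m (n*n) + swap_mat n)"
  define P where "P = col_proj_sum n W"
  have Ycar: "Y \<in> carrier_mat (n*n) (n*n)" by (simp add: Y_def swap_mat_def)
  have Pcar: "P \<in> carrier_mat (n*n) (n*n)" by (simp add: P_def col_proj_sum_def)
  have part1: "\<sigma> = Y - of_nat (b*(b+1)) \<cdot>\<^sub>m P"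
  proof (rule eq_matI)
    show "dim_row \<sigma> = dim_row (Y - of_nat (b*(b+1)) \<cdot>\<^sub>m P)" using Ycar Pcar by (simp add: \<sigma>_def moment2_def)
    show "dim_col \<sigma> = dim_col (Y - of_nat (b*(b+1)) \<cdot>\<^sub>m P)" using Ycar Pcar by (simp add: \<sigma>_def moment2_def)
    fix r c assume "r < dim_row (Y - of_nat (b*(b+1)) \<cdot>\<^sub>m P)" "c < dim_col (Y - of_nat (b*(b+1)) \<cdot>\<^sub>m P)"
    then have r: "r < n*n" and c: "c < n*n" using Ycar Pcar by auto
    have dr: "r div n < n" "r mod n < n" using divmod_lt[OF r] by auto
    have dc: "c div n < n" "c mod n < n" using divmod_lt[OF c] by auto
    have "\<sigma> $$ (r, c) = finner (U \<phi>0) (annih (r div n) (annih (r mod n) (creat (c div n) (creat (c mod n) (U \<phi>0)))))"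
      using r c by (simp add: \<sigma>_def moment2_def \<phi>0_def)
    also have "\<dots> = finner \<phi>0 (Aop n W (r div n) (Aop n W (r mod n) (Cop n W (c div n) (Cop n W (c mod n) \<phi>0))))"
      by (rule moment_entry[OF U_W dr dc \<phi>F])
    also have "\<dots> = Aop n W (r div n) (Aop n W (r mod n) (Cop n W (c div n) (Cop n W (c mod n) \<phi>0))) (mbv n b)"
      unfolding u by (rule finner_basis)
    also have "\<dots> = (\<Sum>p<n. \<Sum>q<n. \<Sum>r'<n. \<Sum>s<n. W $$ (r div n,p) * W $$ (r mod n,q) * cnj (W $$ (c div n,r')) * cnj (W $$ (c mod n,s))
       * annih p (annih q (creat r' (creat s \<phi>0))) (mbv n b))"
      by (rule expand4)
    also have "\<dots> = (\<Sum>p<n. \<Sum>q<n. \<Sum>r'<n. \<Sum>s<n. W $$ (r div n,p) * W $$ (r mod n,q) * cnj (W $$ (c div n,r')) * cnj (W $$ (c mod n,s))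
      * (of_nat ((b+1)^2) * ((if p = r' \<and> q = s then 1 else 0) + (if p = s \<and> q = r' then 1 else 0))
         - of_nat (b*(b+1)) * (if p = q \<and> q = r' \<and> r' = s then 1 else 0)))"
      unfolding \<phi>0_def by (intro sum.cong refl) (simp add: e_val)
    also have "\<dots> = of_nat ((b+1)^2) * ((if r div n = c div n \<and> r mod n = c mod n then 1 else 0) + (if r div n = c mod n \<and> r mod n = c div n then 1 else 0))
      - of_nat (b*(b+1)) * (\<Sum>p<n. W $$ (r div n,p) * W $$ (r mod n,p) * cnj (W $$ (c div n,p)) * cnj (W $$ (c mod n,p)))"
      by (rule entry_sum[OF W_carrier W_unitary(1) dr dc])
    also have "\<dots> = (Y - of_nat (b*(b+1)) \<cdot>\<^sub>m P) $$ (r, c)"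
      unfolding Y_def P_def by (rule rhs_entry[OF W_carrier r c, symmetric])
    finally show "\<sigma> $$ (r, c) = (Y - of_nat (b*(b+1)) \<cdot>\<^sub>m P) $$ (r, c)" .
  qed
  have part2: "(let A = (1 / of_nat (b*(b+1))) \<cdot>\<^sub>m (Y - \<sigma>)
               in A = P \<and> A * A = A \<and> mat_adjoint A = A \<and> vec_space.rank (n*n) A = n)" if b1: "b \<ge> 1"
  proof -
    have nz: "b*(b+1) \<noteq> 0" using b1 by simp
    have bnz: "(of_nat (b*(b+1)) :: complex) \<noteq> 0"
      using of_nat_eq_0_iff[where 'a=complex, of "b*(b+1)"] nz by blast
    have AP: "(1 / of_nat (b*(b+1))) \<cdot>\<^sub>m (Y - \<sigma>) = P"
    proof (rule eq_matI)
      fix r c assume "r < dim_row P" "c < dim_col P"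
      then have r: "r < n*n" and c: "c < n*n" using Pcar by auto
      show "((1 / of_nat (b*(b+1))) \<cdot>\<^sub>m (Y - \<sigma>)) $$ (r, c) = P $$ (r, c)"
        unfolding part1 using r c Ycar Pcar bnz by simp
    qed (use Ycar Pcar part1 in auto)
    define V where "V = Vm n W"
    have Vc: "V \<in> carrier_mat (n*n) n" by (simp add: V_def Vm_carrier)
    have Ac: "mat_adjoint V \<in> carrier_mat n (n*n)" using Vc by (rule adj_carrier)
    have PV: "P = V * mat_adjoint V" unfolding P_def V_def by (rule P_eq[OF W_carrier])
    have VV: "mat_adjoint V * V = 1\<^sub>m n" unfolding V_def by (rule VadjV[OF W_carrier W_unitary(2)])
    have PP: "P * P = P"
    proof -
      have "P * P = V * (mat_adjoint V * (V * mat_adjoint V))" unfolding PV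
        by (rule assoc_mult_mat[OF Vc Ac mult_carrier_mat[OF Vc Ac]])
      also have "mat_adjoint V * (V * mat_adjoint V) = (mat_adjoint V * V) * mat_adjoint V"
        by (rule assoc_mult_mat[OF Ac Vc Ac, symmetric])
      also have "\<dots> = mat_adjoint V" unfolding VV by (rule left_mult_one_mat[OF Ac])
      finally show ?thesis unfolding PV .
    qed
    have PA: "mat_adjoint P = P"
    proof (rule eq_matI)
      show "dim_row (mat_adjoint P) = dim_row P" "dim_col (mat_adjoint P) = dim_col P"
        using Pcar by (simp_all add: adj_dim)
      fix r c assume "r < dim_row P" "c < dim_col P"
      then have r: "r < n*n" and c: "c < n*n" using Pcar by auto
      have "mat_adjoint P $$ (r, c) = cnj (P $$ (c, r))" using r c Pcar by (simp add: adj_index)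
      also have "\<dots> = P $$ (r, c)"
        using r c W_carrier by (simp add: P_def col_proj_sum_def outer_def tensor_vec_def mult.commute)
      finally show "mat_adjoint P $$ (r, c) = P $$ (r, c)" .
    qed
    have PR: "vec_space.rank (n*n) P = n" unfolding PV by (rule rank_VVadj[OF Vc VV])
    show ?thesis unfolding Let_def AP using PP PA PR by simp
  qed
  show ?thesis using part1 part2 unfolding Y_def P_def by simp
qed


end
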